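(* Let $\vec H$ be a DAG and let $u,v$ be two sources of $\vec H$ such that there is a vertex $w\in R(u)\cap R(v)$ with $w\notin R(s)$ for every source $s\notin\{u,v\}$. Then in every DAG elimination forest of $\vec H$, the nodes $u$ and $v$ lie on a common root-to-leaf path (i.e., one is an ancestor of the other).
   Context: For a DAG $\vec H$, a source is a vertex of in-degree $0$; $R(s)$ is the set of vertices reachable from $s$ by a directed path. A DAG elimination forest of a DAG $\vec H$ is defined recursively: if $\vec H$ is empty, it is the empty forest; if the underlying undirected graph of $\vec H$ is disconnected, it is the union of DAG elimination forests (trees) of its connected components; if the underlying graph is connected and $\vec H$ has exactly one source $s$, it is the single-node tree $s$; otherwise (connected, at least two sources) it is a tree whose root is an arbitrarily chosen source $s$ of $\vec H$ and whose subtrees are the trees of a DAG elimination forest of the DAG obtained from $\vec H$ by deleting $s$ and all vertices reachable from $s$. Its nodes are thus the sources of $\vec H$. *)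

theory Defs
  imports Main
begin

definition is_dag :: "'a set \<Rightarrow> ('a \<times> 'a) set \<Rightarrow> bool" where
  "is_dag V E \<longleftrightarrow> finite V \<and> E \<subseteq> V \<times> V \<and> acyclic E"

definition sources :: "'a set \<Rightarrow> ('a \<times> 'a) set \<Rightarrow> 'a set" where
  "sources V E = {s \<in> V. \<forall>x. (x, s) \<notin> E}"

definition reach :: "('a \<times> 'a) set \<Rightarrow> 'a \<Rightarrow> 'a set" where
  "reach E s = {x. (s, x) \<in> E\<^sup>*}"

definition ug_connected :: "'a set \<Rightarrow> ('a \<times> 'a) set \<Rightarrow> bool" where
  "ug_connected V E \<longleftrightarrow> V \<noteq> {} \<and> (\<forall>x\<in>V. \<forall>y\<in>V. (x, y) \<in> (E \<union> E\<inverse>)\<^sup>*)"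

definition ug_component :: "'a set \<Rightarrow> ('a \<times> 'a) set \<Rightarrow> 'a \<Rightarrow> 'a set" where
  "ug_component V E x = {y \<in> V. (x, y) \<in> (E \<union> E\<inverse>)\<^sup>*}"

definition ug_components :: "'a set \<Rightarrow> ('a \<times> 'a) set \<Rightarrow> 'a set set" where
  "ug_components V E = ug_component V E ` V"

text \<open>A forest is represented by its node set N and its
  strict ancestor relation A: (x, y) \<in> A iff x is a proper ancestor of y.
  "elim_forest V E N A" means (N, A) is a DAG elimination forest of (V, E).\<close>

inductive elim_forest :: "'a set \<Rightarrow> ('a \<times> 'a) set \<Rightarrow> 'a set \<Rightarrow> ('a \<times> 'a) set \<Rightarrow> bool" where
  empty: "elim_forest {} {} {} {}"
| disconnected:
    "\<lbrakk> V \<noteq> {}; \<not> ug_connected V E;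
       \<forall>C\<in>ug_components V E. elim_forest C (E \<inter> (C \<times> C)) (NF C) (AF C) \<rbrakk>
     \<Longrightarrow> elim_forest V E (\<Union>C\<in>ug_components V E. NF C) (\<Union>C\<in>ug_components V E. AF C)"
| one_source:
    "\<lbrakk> ug_connected V E; sources V E = {s} \<rbrakk> \<Longrightarrow> elim_forest V E {s} {}"
| many_sources:
    "\<lbrakk> ug_connected V E; s \<in> sources V E; t \<in> sources V E; t \<noteq> s;
       elim_forest (V - reach E s) (E \<inter> ((V - reach E s) \<times> (V - reach E s))) N A \<rbrakk>
     \<Longrightarrow> elim_forest V E (insert s N) (A \<union> {s} \<times> N)"

end

theory Submission
  imports Defs
begin

lemma rt_in_V: "(a, x) \<in> E\<^sup>* \<Longrightarrow> a \<in> V \<Longrightarrow> E \<subseteq> V \<times> V \<Longrightarrow> x \<in> V"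
  by (induction rule: rtrancl_induct) auto

lemma rt_restrict:
  assumes "(u, w) \<in> E\<^sup>*"
    and "\<And>x. (u, x) \<in> E\<^sup>* \<Longrightarrow> (x, w) \<in> E\<^sup>* \<Longrightarrow> x \<in> S"
  shows "(u, w) \<in> (E \<inter> (S \<times> S))\<^sup>*"
  using assms
proof (induction rule: converse_rtrancl_induct)
  case base
  then show ?case by simp
next
  case (step y z)
  have "(z, w) \<in> (E \<inter> (S \<times> S))\<^sup>*"
    using step.IH step.prems step.hyps by (meson converse_rtrancl_into_rtrancl)
  moreover have "y \<in> S" using step.prems step.hyps by (meson converse_rtrancl_into_rtrancl rtrancl.rtrancl_refl)
  moreover have "z \<in> S" using step.prems step.hyps by (meson r_into_rtrancl)
  ultimately show ?case using step.hyps by (meson IntI SigmaI converse_rtrancl_into_rtrancl)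
qed

lemma ug_sym: "(x, y) \<in> (E \<union> E\<inverse>)\<^sup>* \<Longrightarrow> (y, x) \<in> (E \<union> E\<inverse>)\<^sup>*"
proof -
  assume "(x, y) \<in> (E \<union> E\<inverse>)\<^sup>*"
  then have "(y, x) \<in> ((E \<union> E\<inverse>)\<inverse>)\<^sup>*" by (simp add: rtrancl_converseI)
  moreover have "(E \<union> E\<inverse>)\<inverse> = E \<union> E\<inverse>" by auto
  ultimately show ?thesis by simp
qed

lemma E_ug: "(x, y) \<in> E\<^sup>* \<Longrightarrow> (x, y) \<in> (E \<union> E\<inverse>)\<^sup>*"
  by (meson Un_upper1 rtrancl_mono subsetD)

lemma comp_sources:
  assumes "E \<subseteq> V \<times> V" "C = ug_component V E a"
  shows "sources C (E \<inter> (C \<times> C)) = sources V E \<inter> C"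
proof
  show "sources C (E \<inter> (C \<times> C)) \<subseteq> sources V E \<inter> C"
  proof
    fix s assume s: "s \<in> sources C (E \<inter> (C \<times> C))"
    then have sC: "s \<in> C" by (simp add: sources_def)
    then have sV: "s \<in> V" and as: "(a, s) \<in> (E \<union> E\<inverse>)\<^sup>*" using assms by (auto simp: ug_component_def)
    have "(x, s) \<notin> E" for x
    proof
      assume xs: "(x, s) \<in> E"
      then have "x \<in> V" using assms by auto
      moreover have "(a, x) \<in> (E \<union> E\<inverse>)\<^sup>*" using as xs by (meson UnI2 converse_iff rtrancl.rtrancl_into_rtrancl)
      ultimately have "x \<in> C" using assms by (auto simp: ug_component_def)
      then show False using s xs sC by (auto simp: sources_def)
    qed
    then show "s \<in> sources V E \<inter> C" using sV sC by (auto simp: sources_def)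
  qed
next
  show "sources V E \<inter> C \<subseteq> sources C (E \<inter> (C \<times> C))"
    by (auto simp: sources_def)
qed

lemma reach_sources:
  assumes "E \<subseteq> V \<times> V" "s \<in> sources V E" "t \<in> sources V E" "t \<noteq> s"
  shows "t \<notin> reach E s"
proof
  assume "t \<in> reach E s"
  then have "(s, t) \<in> E\<^sup>*" by (simp add: reach_def)
  then show False using assms
    by (metis (no_types, lifting) mem_Collect_eq rtranclE sources_def)
qed

lemma sub_sources:
  assumes "E \<subseteq> V \<times> V" "V' = V - reach E s"
  shows "sources V E \<inter> V' \<subseteq> sources V' (E \<inter> (V' \<times> V'))"
  using assms by (auto simp: sources_def)

lemma sub_sources2:
  assumes "E \<subseteq> V \<times> V" "V' = V - reach E s"
  shows "sources V' (E \<inter> (V' \<times> V')) \<subseteq> sources V E"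
proof
  fix t assume t: "t \<in> sources V' (E \<inter> (V' \<times> V'))"
  then have tV: "t \<in> V'" by (simp add: sources_def)
  have "(x, t) \<notin> E" for x
  proof
    assume xt: "(x, t) \<in> E"
    then have "x \<in> V" using assms by auto
    moreover have "x \<notin> reach E s"
    proof
      assume "x \<in> reach E s"
      then have "t \<in> reach E s" using xt by (simp add: reach_def rtrancl.rtrancl_into_rtrancl)
      then show False using tV assms by auto
    qed
    ultimately have "x \<in> V'" using assms by auto
    then show False using t xt tV by (auto simp: sources_def)
  qed
  then show "t \<in> sources V E" using tV assms by (auto simp: sources_def)
qed

lemma sources_in_N:
  "elim_forest V E N A \<Longrightarrow> E \<subseteq> V \<times> V \<Longrightarrow> sources V E \<subseteq> N"
proof (induction rule: elim_forest.induct)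
  case empty
  then show ?case by (simp add: sources_def)
next
  case (disconnected V E NF AF)
  show ?case
  proof
    fix t assume t: "t \<in> sources V E"
    then have tV: "t \<in> V" by (simp add: sources_def)
    define C where "C = ug_component V E t"
    have Cc: "C \<in> ug_components V E" using tV by (simp add: C_def ug_components_def)
    have tC: "t \<in> C" using tV by (simp add: C_def ug_component_def)
    have "t \<in> sources C (E \<inter> (C \<times> C))"
      using comp_sources[OF disconnected.prems C_def] t tC by simp
    moreover have "sources C (E \<inter> (C \<times> C)) \<subseteq> NF C" using disconnected.IH Cc by auto
    ultimately show "t \<in> (\<Union>C\<in>ug_components V E. NF C)" using Cc by auto
  qed
next
  case (one_source V E s)
  then show ?case by simp
next
  case (many_sources V E s t N A)
  show ?case
  proof
    fix x assume x: "x \<in> sources V E"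
    show "x \<in> insert s N"
    proof (cases "x = s")
      case False
      then have "x \<notin> reach E s" using reach_sources[OF many_sources.prems many_sources.hyps(2) x] by simp
      then have "x \<in> sources (V - reach E s) (E \<inter> ((V - reach E s) \<times> (V - reach E s)))"
        using sub_sources[OF many_sources.prems refl, of s] x by (auto simp: sources_def)
      then show ?thesis using many_sources.IH by auto
    qed simp
  qed
qed

lemma key:
  "elim_forest V E N A \<Longrightarrow> E \<subseteq> V \<times> V \<Longrightarrow> u \<in> sources V E \<Longrightarrow> v \<in> sources V E \<Longrightarrow> u \<noteq> v
   \<Longrightarrow> (u, w) \<in> E\<^sup>* \<Longrightarrow> (v, w) \<in> E\<^sup>* \<Longrightarrow> (\<forall>s\<in>sources V E - {u, v}. (s, w) \<notin> E\<^sup>*)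
   \<Longrightarrow> (u, v) \<in> A \<or> (v, u) \<in> A"
proof (induction arbitrary: u v w rule: elim_forest.induct)
  case empty
  then show ?case by (simp add: sources_def)
next
  case (disconnected V E NF AF)
  have uV: "u \<in> V" using disconnected.prems by (simp add: sources_def)
  define C where "C = ug_component V E u"
  have Cc: "C \<in> ug_components V E" using uV by (simp add: C_def ug_components_def)
  have uC: "u \<in> C" using uV by (simp add: C_def ug_component_def)
  have vV: "v \<in> V" using disconnected.prems by (simp add: sources_def)
  have "(u, v) \<in> (E \<union> E\<inverse>)\<^sup>*"
    using E_ug[OF disconnected.prems(5)] ug_sym[OF E_ug[OF disconnected.prems(6)]] by simp
  then have vC: "v \<in> C" using vV by (simp add: C_def ug_component_def)
  have srcC: "sources C (E \<inter> (C \<times> C)) = sources V E \<inter> C"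
    using comp_sources[OF disconnected.prems(1) C_def] .
  have inC: "x \<in> C" if "(u, x) \<in> E\<^sup>*" for x
  proof -
    have "x \<in> V" using rt_in_V[OF that uV disconnected.prems(1)] .
    then show ?thesis using E_ug[OF that] by (simp add: C_def ug_component_def)
  qed
  have uw: "(u, w) \<in> (E \<inter> (C \<times> C))\<^sup>*"
    using rt_restrict[OF disconnected.prems(5)] inC by blast
  have inC2: "x \<in> C" if "(v, x) \<in> E\<^sup>*" for x
  proof -
    have "x \<in> V" using rt_in_V[OF that vV disconnected.prems(1)] .
    moreover have "(v, x) \<in> (E \<union> E\<inverse>)\<^sup>*" using E_ug[OF that] .
    moreover have "(u, v) \<in> (E \<union> E\<inverse>)\<^sup>*" using vC by (simp add: C_def ug_component_def)
    ultimately show ?thesis by (simp add: C_def ug_component_def)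
  qed
  have vw: "(v, w) \<in> (E \<inter> (C \<times> C))\<^sup>*"
    using rt_restrict[OF disconnected.prems(6)] inC2 by blast
  have oth: "\<forall>s\<in>sources C (E \<inter> (C \<times> C)) - {u, v}. (s, w) \<notin> (E \<inter> (C \<times> C))\<^sup>*"
  proof (intro ballI notI)
    fix s assume s: "s \<in> sources C (E \<inter> (C \<times> C)) - {u, v}" and sw: "(s, w) \<in> (E \<inter> (C \<times> C))\<^sup>*"
    have "(s, w) \<in> E\<^sup>*" using sw by (meson Int_lower1 rtrancl_mono subsetD)
    then show False using s srcC disconnected.prems(7) by auto
  qed
  have "(u, v) \<in> AF C \<or> (v, u) \<in> AF C"
    using disconnected.IH Cc disconnected.prems uC vC srcC uw vw oth by auto
  then show ?case using Cc by auto
next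
  case (one_source V E s)
  then show ?case by auto
next
  case (many_sources V E s t N A)
  define V' where "V' = V - reach E s"
  have sN: "sources V E - {s} \<subseteq> N"
  proof
    fix x assume x: "x \<in> sources V E - {s}"
    then have "x \<notin> reach E s" using reach_sources[OF many_sources.prems(1) many_sources.hyps(2)] by auto
    then have "x \<in> sources V' (E \<inter> (V' \<times> V'))"
      using sub_sources[OF many_sources.prems(1) V'_def] x by (auto simp: sources_def V'_def)
    moreover have "E \<inter> (V' \<times> V') \<subseteq> V' \<times> V'" by auto
    ultimately show "x \<in> N" using sources_in_N[OF many_sources.hyps(5)[folded V'_def]] by auto
  qed
  show ?case
  proof (cases "s = u \<or> s = v")
    case True
    then show ?thesis using sN many_sources.prems by auto
  next
    case False
    have wr: "w \<notin> reach E s"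
      using many_sources.prems(7) many_sources.hyps(2) False by (auto simp: reach_def)
    have uV: "u \<in> V" and vV: "v \<in> V" using many_sources.prems by (auto simp: sources_def)
    have inV': "x \<in> V'" if "(a, x) \<in> E\<^sup>*" "(x, w) \<in> E\<^sup>*" "a \<in> V" for a x
    proof -
      have "x \<in> V" using rt_in_V[OF that(1) that(3) many_sources.prems(1)] .
      moreover have "x \<notin> reach E s"
      proof
        assume "x \<in> reach E s"
        then have "w \<in> reach E s" using that(2) by (simp add: reach_def)
        then show False using wr by simp
      qed
      ultimately show ?thesis by (simp add: V'_def)
    qed
    have uw: "(u, w) \<in> (E \<inter> (V' \<times> V'))\<^sup>*"
      using rt_restrict[OF many_sources.prems(5)] inV' uV by blast
    have vw: "(v, w) \<in> (E \<inter> (V' \<times> V'))\<^sup>*"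
      using rt_restrict[OF many_sources.prems(6)] inV' vV by blast
    have su: "u \<in> sources V' (E \<inter> (V' \<times> V'))" "v \<in> sources V' (E \<inter> (V' \<times> V'))"
      using sN False many_sources.prems sub_sources[OF many_sources.prems(1) V'_def]
        reach_sources[OF many_sources.prems(1) many_sources.hyps(2)]
      by (auto simp: V'_def sources_def)
    have oth: "\<forall>x\<in>sources V' (E \<inter> (V' \<times> V')) - {u, v}. (x, w) \<notin> (E \<inter> (V' \<times> V'))\<^sup>*"
    proof (intro ballI notI)
      fix x assume x: "x \<in> sources V' (E \<inter> (V' \<times> V')) - {u, v}" and xw: "(x, w) \<in> (E \<inter> (V' \<times> V'))\<^sup>*"
      have "(x, w) \<in> E\<^sup>*" using xw by (meson Int_lower1 rtrancl_mono subsetD)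
      moreover have "x \<in> sources V E" using x sub_sources2[OF many_sources.prems(1) V'_def] by auto
      ultimately show False using x many_sources.prems(7) by auto
    qed
    have "(u, v) \<in> A \<or> (v, u) \<in> A"
      using many_sources.IH[folded V'_def, of u v w] su uw vw oth many_sources.prems(4) by auto
    then show ?thesis by auto
  qed
qed

theorem mainTheorem5:
  fixes V :: "'a set" and E :: "('a \<times> 'a) set" and u v w :: 'a
  assumes "is_dag V E"
    and "u \<in> sources V E" and "v \<in> sources V E" and "u \<noteq> v"
    and "w \<in> reach E u \<inter> reach E v"
    and "\<forall>s\<in>sources V E - {u, v}. w \<notin> reach E s"
  shows "\<forall>N A. elim_forest V E N A \<longrightarrow> (u, v) \<in> A \<or> (v, u) \<in> A"
proof (intro allI impI)
  fix N A assume "elim_forest V E N A"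
  moreover have "E \<subseteq> V \<times> V" using assms(1) by (simp add: is_dag_def)
  ultimately show "(u, v) \<in> A \<or> (v, u) \<in> A"
    using key[of V E N A u v w] assms by (auto simp: reach_def)
qed

end
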